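(* Consider the following model of a Kater reversible pendulum. A rigid bar of length $L$ and mass $m_b$ carries two knife-edge pivots $c_1$ and $c_2$ placed symmetrically on the bar, with a linear coordinate along the bar having origin at $c_1$ and $c_2$ at $x=d>0$. A fixed disk of mass $m_f$ and radius $r_f$ is centred at $x_f$ with $(d-L)/2<x_f<0$, and a movable disk of mass $m_m$ and radius $r_m$ is centred at a variable position $x$. Let $m=m_b+m_f+m_m$, $K=\frac{\frac d2 m_b+x_f m_f}{m}$, and let $h_1=K+\frac{m_m}{m}x$, $h_2=d-h_1$ be the distances of the centre of mass from $c_1$ and $c_2$. Let \[ I_0''=\frac{r_f^2}{2}m_f+\frac{r_m^2}{2}m_m+\frac{L^2}{12}m_b,\qquad I_0'=I_0''+m_f(x_f-K)^2+m_b\left(\tfrac d2-K\right)^2+m_mK^2, \] and let $I_0=m_m\frac{m-m_m}{m}x^2-2m_mKx+I_0'$ be the moment of inertia about the centre of mass. The equivalent length for oscillation about $c_i$ is $l_i=\frac{I_0+mh_i^2}{mh_i}$, and a characteristic position is a position $x$ of the movable disk with $l_1=l_2$ (equivalently equal periods $T_i=2\pi\sqrt{l_i/g}$ of small oscillations about both pivots); the common value $l$ is the associated characteristic length. Then: (i) if the bar is sufficiently long, namely $\frac{m_f}{m_m}|d-2x_f|\le L$, the pendulum always admits the characteristic position \[ x_{0_1}=\frac d2+\frac{m_f}{2m_m}(d-2x_f), \] whose characteristic length \[ l(x_{0_1})=\frac d2+2\frac{I_0''}{md}+\frac{m_f(m_m+m_f)(d-2x_f)^2}{2m_m m d} \]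 does not in general coincide with the distance $d$ between the pivots; (ii) under the condition $m_md^2+4mdK-4mK^2-4I_0'\ge 0$, the pendulum admits two further characteristic positions \[ x_{0_{2,3}}=\frac d2\pm\frac12\sqrt{d^2+4\,\frac{mK^2-mdK+I_0'}{m_m}}, \] symmetric with respect to the midpoint $d/2$ between the pivots, whose common characteristic length is exactly $d$; (iii) the pendulum admits no further characteristic positions.
   Context: Small oscillations about pivot $c_i$ obey $\ddot\varphi+\frac{mgh_i}{I_i}\varphi=0$ with $I_i=I_0+mh_i^2$ (Huygens–Steiner), so the period is $T_i=2\pi\sqrt{I_i/(mgh_i)}$ and the equivalent (simple-pendulum) length is $l_i=I_i/(mh_i)$. *)

theory Defs
  imports Complex_Main
begin

definition kmass :: "real \<Rightarrow> real \<Rightarrow> real \<Rightarrow> real" where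
  "kmass mb mf mm = mb + mf + mm"

definition kK :: "real \<Rightarrow> real \<Rightarrow> real \<Rightarrow> real \<Rightarrow> real \<Rightarrow> real" where
  "kK mb mf mm d xf = (d / 2 * mb + xf * mf) / kmass mb mf mm"

definition h1 :: "real \<Rightarrow> real \<Rightarrow> real \<Rightarrow> real \<Rightarrow> real \<Rightarrow> real \<Rightarrow> real" where
  "h1 mb mf mm d xf x = kK mb mf mm d xf + mm / kmass mb mf mm * x"

definition h2 :: "real \<Rightarrow> real \<Rightarrow> real \<Rightarrow> real \<Rightarrow> real \<Rightarrow> real \<Rightarrow> real" where
  "h2 mb mf mm d xf x = d - h1 mb mf mm d xf x"

definition I0pp :: "real \<Rightarrow> real \<Rightarrow> real \<Rightarrow> real \<Rightarrow> real \<Rightarrow> real \<Rightarrow> real" where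
  "I0pp L mb mf rf mm rm = rf^2 / 2 * mf + rm^2 / 2 * mm + L^2 / 12 * mb"

definition I0p :: "real \<Rightarrow> real \<Rightarrow> real \<Rightarrow> real \<Rightarrow> real \<Rightarrow> real \<Rightarrow> real \<Rightarrow> real \<Rightarrow> real" where
  "I0p L mb mf rf xf mm rm d =
     (let K = kK mb mf mm d xf in
      I0pp L mb mf rf mm rm + mf * (xf - K)^2 + mb * (d / 2 - K)^2 + mm * K^2)"

definition I0 :: "real \<Rightarrow> real \<Rightarrow> real \<Rightarrow> real \<Rightarrow> real \<Rightarrow> real \<Rightarrow> real \<Rightarrow> real \<Rightarrow> real \<Rightarrow> real" where
  "I0 L mb mf rf xf mm rm d x =
     (let m = kmass mb mf mm; K = kK mb mf mm d xf in
      mm * (m - mm) / m * x^2 - 2 * mm * K * x + I0p L mb mf rf xf mm rm d)"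

definition l1 :: "real \<Rightarrow> real \<Rightarrow> real \<Rightarrow> real \<Rightarrow> real \<Rightarrow> real \<Rightarrow> real \<Rightarrow> real \<Rightarrow> real \<Rightarrow> real" where
  "l1 L mb mf rf xf mm rm d x =
     (let m = kmass mb mf mm; h = h1 mb mf mm d xf x in
      (I0 L mb mf rf xf mm rm d x + m * h^2) / (m * h))"

definition l2 :: "real \<Rightarrow> real \<Rightarrow> real \<Rightarrow> real \<Rightarrow> real \<Rightarrow> real \<Rightarrow> real \<Rightarrow> real \<Rightarrow> real \<Rightarrow> real" where
  "l2 L mb mf rf xf mm rm d x =
     (let m = kmass mb mf mm; h = h2 mb mf mm d xf x in
      (I0 L mb mf rf xf mm rm d x + m * h^2) / (m * h))"

text \<open>A characteristic position: both equivalent lengths are defined (h1, h2 nonzero) and equal.\<close>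
definition char_pos :: "real \<Rightarrow> real \<Rightarrow> real \<Rightarrow> real \<Rightarrow> real \<Rightarrow> real \<Rightarrow> real \<Rightarrow> real \<Rightarrow> real \<Rightarrow> bool" where
  "char_pos L mb mf rf xf mm rm d x \<longleftrightarrow>
     h1 mb mf mm d xf x \<noteq> 0 \<and> h2 mb mf mm d xf x \<noteq> 0 \<and>
     l1 L mb mf rf xf mm rm d x = l2 L mb mf rf xf mm rm d x"

end

theory Submission imports Defs begin
lemma hI_gen:
  fixes m K t x Q :: real
  assumes "m = mb+mf+mm" "m*K = d/2*mb + xf*mf" "m*t = mm*x" "A = mm*x^2 - mm*x*t"
  shows "A - 2*mm*K*x + (Q + mf*(xf-K)^2 + mb*(d/2-K)^2 + mm*K^2) = Q + mf*(xf-(K+t))^2 + mb*(d/2-(K+t))^2 + mm*(x-(K+t))^2"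
  using assms by algebra

lemma hI: assumes "mb>0" "mf>0" "mm>0"
  shows "I0 L mb mf rf xf mm rm d x = I0pp L mb mf rf mm rm + mf*(xf - h1 mb mf mm d xf x)^2
     + mb*(d/2 - h1 mb mf mm d xf x)^2 + mm*(x - h1 mb mf mm d xf x)^2"
proof -
  let ?m = "kmass mb mf mm"
  let ?K = "kK mb mf mm d xf"
  have m: "?m > 0" using assms by (simp add: kmass_def)
  have 1: "?m * ?K = d/2*mb + xf*mf" using m by (simp add: kK_def)
  have 2: "?m * (mm / ?m * x) = mm*x" using m by simp
  have 3: "mm * (?m - mm) / ?m * x^2 = mm*x^2 - mm*x*(mm / ?m * x)" using m
    by (simp add: field_simps power2_eq_square)
  show ?thesis unfolding I0_def I0p_def h1_def Let_def
    using hI_gen[OF _ 1 2 3, of "I0pp L mb mf rf mm rm"] by (simp add: kmass_def)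
qed

lemma hq: assumes "mb>0" "mf>0" "mm>0"
  shows "I0 L mb mf rf xf mm rm d x - kmass mb mf mm * h1 mb mf mm d xf x * h2 mb mf mm d xf x
     = mm*(x^2 - d*x) + I0p L mb mf rf xf mm rm d - kmass mb mf mm*kK mb mf mm d xf*d + kmass mb mf mm*(kK mb mf mm d xf)^2"
proof -
  have m: "kmass mb mf mm > 0" using assms by (simp add: kmass_def)
  show ?thesis using m unfolding I0_def h2_def h1_def Let_def
    by (simp add: field_simps power2_eq_square)
qed
theorem corollary2:
  fixes L mb mf rf xf mm rm d :: real
  assumes "L > 0" "mb > 0" "mf > 0" "mm > 0" "rf > 0" "rm > 0" "d > 0"
    and "(d - L) / 2 < xf" "xf < 0"
  defines "m \<equiv> kmass mb mf mm"
    and "K \<equiv> kK mb mf mm d xf"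
    and "x01 \<equiv> d / 2 + mf / (2 * mm) * (d - 2 * xf)"
    and "disc \<equiv> d^2 + 4 * (kmass mb mf mm * d * kK mb mf mm d xf - kmass mb mf mm * (kK mb mf mm d xf)^2
                        - I0p L mb mf rf xf mm rm d) / mm"
    and "x02 \<equiv> d / 2 + sqrt (d^2 + 4 * (kmass mb mf mm * d * kK mb mf mm d xf - kmass mb mf mm * (kK mb mf mm d xf)^2 - I0p L mb mf rf xf mm rm d) / mm) / 2"
    and "x03 \<equiv> d / 2 - sqrt (d^2 + 4 * (kmass mb mf mm * d * kK mb mf mm d xf - kmass mb mf mm * (kK mb mf mm d xf)^2 - I0p L mb mf rf xf mm rm d) / mm) / 2"
  shows
    "(mf / mm * \<bar>d - 2 * xf\<bar> \<le> L \<longrightarrow>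
        x01 \<in> {(d - L) / 2 .. (d + L) / 2} \<and>
        char_pos L mb mf rf xf mm rm d x01 \<and>
        l1 L mb mf rf xf mm rm d x01 =
          d / 2 + 2 * I0pp L mb mf rf mm rm / (m * d)
          + mf * (mm + mf) * (d - 2 * xf)^2 / (2 * mm * m * d))
   \<and> (mm * d^2 + 4 * m * d * K - 4 * m * K^2 - 4 * I0p L mb mf rf xf mm rm d \<ge> 0 \<longrightarrow>
        char_pos L mb mf rf xf mm rm d x02 \<and> char_pos L mb mf rf xf mm rm d x03 \<and>
        l1 L mb mf rf xf mm rm d x02 = d \<and> l1 L mb mf rf xf mm rm d x03 = d)
   \<and> (\<forall>x. char_pos L mb mf rf xf mm rm d x \<longrightarrow>
        x = x01 \<or> (disc \<ge> 0 \<and> (x = x02 \<or> x = x03)))"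
  proof -
  let ?I = "I0 L mb mf rf xf mm rm d"
  let ?h1 = "h1 mb mf mm d xf"
  let ?h2 = "h2 mb mf mm d xf"
  let ?l1 = "l1 L mb mf rf xf mm rm d"
  let ?l2 = "l2 L mb mf rf xf mm rm d"
  let ?P = "I0p L mb mf rf xf mm rm d"
  let ?Q = "I0pp L mb mf rf mm rm"
  have m0: "m > 0" using assms(2-4) by (simp add: m_def kmass_def)
  have Qpos: "?Q > 0" unfolding I0pp_def using assms(2-6)
    by (intro add_pos_nonneg add_nonneg_nonneg) auto
  have Ipos: "?I x > 0" for x
  proof -
    have "?I x = ?Q + mf*(xf - ?h1 x)^2 + mb*(d/2 - ?h1 x)^2 + mm*(x - ?h1 x)^2"
      using hI assms(2-4) by blast
    moreover have "mf*(xf - ?h1 x)^2 + mb*(d/2 - ?h1 x)^2 + mm*(x - ?h1 x)^2 \<ge> 0"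
      using assms(2-4) by (intro add_nonneg_nonneg) auto
    ultimately show ?thesis using Qpos by linarith
  qed
  have h2e: "?h2 x = d - ?h1 x" for x by (simp add: h2_def)
  have l1e: "?h1 x \<noteq> 0 \<Longrightarrow> ?l1 x = ?I x / (m * ?h1 x) + ?h1 x" for x
    using m0 unfolding l1_def Let_def m_def[symmetric] by (simp add: field_simps power2_eq_square)
  have l2e: "?h2 x \<noteq> 0 \<Longrightarrow> ?l2 x = ?I x / (m * ?h2 x) + ?h2 x" for x
    using m0 unfolding l2_def Let_def m_def[symmetric] by (simp add: field_simps power2_eq_square)
  have key: "?h1 x \<noteq> 0 \<Longrightarrow> ?h2 x \<noteq> 0 \<Longrightarrow>
      (?l1 x = ?l2 x \<longleftrightarrow> (?h1 x = ?h2 x \<or> ?I x = m * ?h1 x * ?h2 x))" for x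
  proof -
    assume a: "?h1 x \<noteq> 0" "?h2 x \<noteq> 0"
    have "?l1 x - ?l2 x = (?I x/(m*?h1 x) + ?h1 x) - (?I x/(m*?h2 x) + ?h2 x)"
      using l1e[OF a(1)] l2e[OF a(2)] by simp
    also have "\<dots> = (?h2 x - ?h1 x) * (?I x - m * ?h1 x * ?h2 x) / (m * ?h1 x * ?h2 x)"
      using a m0 by (simp add: field_simps)
    finally have "?l1 x - ?l2 x = (?h2 x - ?h1 x) * (?I x - m * ?h1 x * ?h2 x) / (m * ?h1 x * ?h2 x)" .
    moreover have "m * ?h1 x * ?h2 x \<noteq> 0" using a m0 by simp
    ultimately have "?l1 x = ?l2 x \<longleftrightarrow> (?h2 x - ?h1 x) * (?I x - m * ?h1 x * ?h2 x) = 0"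
      by (metis divide_eq_0_iff eq_iff_diff_eq_0)
    then show ?thesis by auto
  qed
  have hx01: "?h1 x01 = d/2"
  proof -
    have a: "m*K = d/2*mb + xf*mf" using m0 by (simp add: K_def kK_def m_def)
    have b: "mm*x01 = mm*d/2 + mf*(d-2*xf)/2" using assms(4) by (simp add: x01_def field_simps)
    have c: "?h1 x01 = (m*K + mm*x01)/m" using m0 by (simp add: h1_def m_def K_def field_simps)
    have "m*K + mm*x01 = m*(d/2)" unfolding a b by (simp add: m_def kmass_def field_simps)
    then show ?thesis using c m0 by simp
  qed
  have heq: "?h1 x = ?h2 x \<longleftrightarrow> x = x01" for x
  proof -
    have "?h1 x - ?h1 x01 = mm / m * (x - x01)" by (simp add: h1_def m_def algebra_simps diff_divide_distrib)
    then have e: "?h1 x - d/2 = mm / m * (x - x01)" using hx01 by simp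
    have "?h1 x = ?h2 x \<longleftrightarrow> ?h1 x - d/2 = 0" using h2e[of x] by auto
    also have "\<dots> \<longleftrightarrow> x - x01 = 0" unfolding e using m0 assms(4) by simp
    finally show ?thesis by simp
  qed
  have discd: "disc = d^2 + 4 * (m * d * K - m * K^2 - ?P) / mm"
    by (simp add: disc_def m_def K_def)
  have x02d: "x02 = d/2 + sqrt disc / 2" by (simp add: x02_def disc_def)
  have x03d: "x03 = d/2 - sqrt disc / 2" by (simp add: x03_def disc_def)
  have quad: "?I x - m * ?h1 x * ?h2 x = mm * ((x - d/2)^2 - disc/4)" for x
  proof -
    have e: "?I x - m * ?h1 x * ?h2 x = mm*(x^2 - d*x) + ?P - m*K*d + m*K^2"
      using hq[OF assms(2-4), of L rf xf rm d x] unfolding m_def K_def by simp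
    have f: "mm*(disc/4) = mm*d^2/4 + m*d*K - m*K^2 - ?P" unfolding discd using assms(4)
      by (simp add: field_simps)
    have "mm * ((x - d/2)^2 - disc/4) = mm*(x - d/2)^2 - mm*(disc/4)" by (simp add: algebra_simps)
    also have "\<dots> = mm*(x^2 - d*x) + ?P - m*K*d + m*K^2" unfolding f
      by (simp add: algebra_simps power2_eq_square)
    finally show ?thesis using e by simp
  qed
  have good: "?h1 x \<noteq> 0 \<and> ?h2 x \<noteq> 0 \<and> ?l1 x = ?l2 x \<and> ?l1 x = d"
    if q: "(x - d/2)^2 = disc/4" for x
  proof -
    have e: "?I x = m * ?h1 x * ?h2 x" using quad[of x] q by simp
    have a1: "?h1 x \<noteq> 0" using e Ipos[of x] by auto
    have a2: "?h2 x \<noteq> 0" using e Ipos[of x] by auto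
    have "?l1 x = d" using l1e[OF a1] e a1 m0 h2e[of x] by simp
    then show ?thesis using a1 a2 key[OF a1 a2] e by simp
  qed
  have P1: "mf / mm * \<bar>d - 2 * xf\<bar> \<le> L \<longrightarrow>
        x01 \<in> {(d - L) / 2 .. (d + L) / 2} \<and>
        char_pos L mb mf rf xf mm rm d x01 \<and>
        ?l1 x01 = d / 2 + 2 * ?Q / (m * d) + mf * (mm + mf) * (d - 2 * xf)^2 / (2 * mm * m * d)"
  proof
    assume A: "mf / mm * \<bar>d - 2 * xf\<bar> \<le> L"
    have "d - 2*xf > 0" using assms by simp
    then have "mf / mm * (d - 2 * xf) \<le> L" using A by simp
    then have "x01 - d/2 \<le> L/2" "x01 - d/2 \<ge> 0" unfolding x01_def using assms(3,4) \<open>d - 2*xf > 0\<close>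
      by (auto simp: field_simps)
    then have int: "x01 \<in> {(d - L) / 2 .. (d + L) / 2}" using assms(1) by simp
    have a1: "?h1 x01 \<noteq> 0" "?h2 x01 \<noteq> 0" using hx01 h2e[of x01] assms(7) by auto
    have cp: "char_pos L mb mf rf xf mm rm d x01"
      unfolding char_pos_def using a1 key[OF a1] heq by simp
    have "?I x01 = ?Q + mf*(xf - ?h1 x01)^2 + mb*(d/2 - ?h1 x01)^2 + mm*(x01 - ?h1 x01)^2"
      using hI assms(2-4) by blast
    also have "\<dots> = ?Q + mf * (mm + mf) * (d - 2 * xf)^2 / (4 * mm)"
      unfolding hx01 unfolding x01_def using assms(4) by (simp add: field_simps power2_eq_square)
    finally have Ie: "?I x01 = ?Q + mf * (mm + mf) * (d - 2 * xf)^2 / (4 * mm)" .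
    have "?l1 x01 = d / 2 + 2 * ?Q / (m * d) + mf * (mm + mf) * (d - 2 * xf)^2 / (2 * mm * m * d)"
      unfolding l1e[OF a1(1)] Ie hx01 using m0 assms(4,7) by (simp add: field_simps)
    then show "x01 \<in> {(d - L) / 2 .. (d + L) / 2} \<and> char_pos L mb mf rf xf mm rm d x01 \<and>
        ?l1 x01 = d / 2 + 2 * ?Q / (m * d) + mf * (mm + mf) * (d - 2 * xf)^2 / (2 * mm * m * d)"
      using int cp by simp
  qed
  have P2: "mm * d^2 + 4 * m * d * K - 4 * m * K^2 - 4 * ?P \<ge> 0 \<longrightarrow>
        char_pos L mb mf rf xf mm rm d x02 \<and> char_pos L mb mf rf xf mm rm d x03 \<and>
        ?l1 x02 = d \<and> ?l1 x03 = d"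
  proof
    assume A: "mm * d^2 + 4 * m * d * K - 4 * m * K^2 - 4 * ?P \<ge> 0"
    have "disc = (mm * d^2 + 4 * m * d * K - 4 * m * K^2 - 4 * ?P) / mm"
      unfolding discd using assms(4) by (simp add: field_simps)
    then have dp: "disc \<ge> 0" using A assms(4) by simp
    have q2: "(x02 - d/2)^2 = disc/4" "(x03 - d/2)^2 = disc/4"
      unfolding x02d x03d using dp by (simp_all add: power_divide)
    show "char_pos L mb mf rf xf mm rm d x02 \<and> char_pos L mb mf rf xf mm rm d x03 \<and>
        ?l1 x02 = d \<and> ?l1 x03 = d"
      using good[OF q2(1)] good[OF q2(2)] unfolding char_pos_def by simp
  qed
  have P3: "\<forall>x. char_pos L mb mf rf xf mm rm d x \<longrightarrow>
        x = x01 \<or> (disc \<ge> 0 \<and> (x = x02 \<or> x = x03))"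
  proof (intro allI impI)
    fix x assume c: "char_pos L mb mf rf xf mm rm d x"
    then have a: "?h1 x \<noteq> 0" "?h2 x \<noteq> 0" "?l1 x = ?l2 x" unfolding char_pos_def by auto
    show "x = x01 \<or> (disc \<ge> 0 \<and> (x = x02 \<or> x = x03))"
    proof (cases "x = x01")
      case False
      then have "?I x = m * ?h1 x * ?h2 x" using key[OF a(1,2)] a(3) heq by auto
      then have q: "(x - d/2)^2 = disc/4" using quad[of x] assms(4) by simp
      then have dp: "disc \<ge> 0" by (metis zero_le_power2 divide_nonneg_pos zero_less_numeral le_divide_eq_numeral1(1) mult_zero_left)
      have "(x - d/2)^2 = (sqrt disc / 2)^2" using q dp by (simp add: power_divide)
      then have "x - d/2 = sqrt disc / 2 \<or> x - d/2 = - (sqrt disc / 2)"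
        using power2_eq_iff by blast
      then show ?thesis unfolding x02d x03d using dp by auto
    qed simp
  qed
  show ?thesis using P1 P2 P3 by blast
qed

end
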